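(* Let $G=(V,E)$ be a finite simple undirected connected graph. There exists a real constant $c>0$ such that for every nonempty proper subset $S\subset V$, \[ h^{\swarrow}(S)\;\le\;\frac{1}{|V\setminus S|}\Big(\sum_{u\in V\setminus S} d(u,S)\Big)\Big(\sum_{v\in V\setminus S} d(v)\Big)\;\le\; c\,|V\setminus S|^3 . \]
   Context: $d(v)$ is the degree of $v$, $d(u,v)$ the shortest-path distance and $d(u,S)=\min_{v\in S}d(u,v)$. A (simple) random walk moves from the current vertex $u$ to a uniformly random neighbor (probability $1/d(u)$); $H(u,S)$ is the expected number of steps for the walk started at $u$ to first reach a vertex of $S$, and $h^{\swarrow}(S)=\frac{\sum_{u\in V\setminus S}H(u,S)}{|V\setminus S|}$. *)

theory Defs
  imports Complex_Main
begin

definition simple_graph :: "'a set \<Rightarrow> ('a \<Rightarrow> 'a \<Rightarrow> bool) \<Rightarrow> bool" where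
  "simple_graph V E \<longleftrightarrow> finite V \<and> (\<forall>u v. E u v \<longrightarrow> u \<in> V \<and> v \<in> V)
     \<and> (\<forall>u v. E u v \<longrightarrow> E v u) \<and> (\<forall>u. \<not> E u u)"

definition deg :: "'a set \<Rightarrow> ('a \<Rightarrow> 'a \<Rightarrow> bool) \<Rightarrow> 'a \<Rightarrow> nat" where
  "deg V E v = card {u \<in> V. E v u}"

fun is_walk :: "'a set \<Rightarrow> ('a \<Rightarrow> 'a \<Rightarrow> bool) \<Rightarrow> 'a list \<Rightarrow> bool" where
  "is_walk V E [] = False"
| "is_walk V E [x] = (x \<in> V)"
| "is_walk V E (x # y # xs) = (x \<in> V \<and> E x y \<and> is_walk V E (y # xs))"

definition connected_graph :: "'a set \<Rightarrow> ('a \<Rightarrow> 'a \<Rightarrow> bool) \<Rightarrow> bool" where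
  "connected_graph V E \<longleftrightarrow> (\<forall>u\<in>V. \<forall>v\<in>V. \<exists>xs. is_walk V E xs \<and> hd xs = u \<and> last xs = v)"

definition gdist :: "'a set \<Rightarrow> ('a \<Rightarrow> 'a \<Rightarrow> bool) \<Rightarrow> 'a \<Rightarrow> 'a \<Rightarrow> nat" where
  "gdist V E u v = (LEAST n. \<exists>xs. is_walk V E xs \<and> hd xs = u \<and> last xs = v \<and> length xs = Suc n)"

definition gdist_set :: "'a set \<Rightarrow> ('a \<Rightarrow> 'a \<Rightarrow> bool) \<Rightarrow> 'a \<Rightarrow> 'a set \<Rightarrow> nat" where
  "gdist_set V E u S = Min (gdist V E u ` S)"

text \<open>Probability that the simple random walk follows the given vertex sequence
(given its first vertex): product of the transition probabilities 1/d(x) for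
each step x \<rightarrow> y along an edge.\<close>
fun walk_prob :: "'a set \<Rightarrow> ('a \<Rightarrow> 'a \<Rightarrow> bool) \<Rightarrow> 'a list \<Rightarrow> real" where
  "walk_prob V E [] = 0"
| "walk_prob V E [x] = 1"
| "walk_prob V E (x # y # xs) =
     (if E x y then 1 / real (deg V E x) else 0) * walk_prob V E (y # xs)"

definition hit_at_prob :: "'a set \<Rightarrow> ('a \<Rightarrow> 'a \<Rightarrow> bool) \<Rightarrow> 'a set \<Rightarrow> 'a \<Rightarrow> nat \<Rightarrow> real" where
  "hit_at_prob V E S u t =
     (\<Sum>xs\<in>{xs. set xs \<subseteq> V \<and> length xs = Suc t \<and> hd xs = u
               \<and> (\<forall>i<t. xs ! i \<notin> S) \<and> xs ! t \<in> S}. walk_prob V E xs)"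

definition hitting_time :: "'a set \<Rightarrow> ('a \<Rightarrow> 'a \<Rightarrow> bool) \<Rightarrow> 'a \<Rightarrow> 'a set \<Rightarrow> real" where
  "hitting_time V E u S = (\<Sum>t. real t * hit_at_prob V E S u t)"

definition avg_hitting_time :: "'a set \<Rightarrow> ('a \<Rightarrow> 'a \<Rightarrow> bool) \<Rightarrow> 'a set \<Rightarrow> real" where
  "avg_hitting_time V E S =
     (\<Sum>u\<in>V - S. hitting_time V E u S) / real (card (V - S))"

end

theory Submission
  imports Defs
begin


lemma walk_prob_nonneg: "walk_prob V E xs \<ge> 0"
  by (induction V E xs rule: walk_prob.induct) auto

lemma hit_nonneg: "hit_at_prob V E S u t \<ge> 0"
  unfolding hit_at_prob_def by (intro sum_nonneg walk_prob_nonneg)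

lemma hit0: assumes "u \<in> V" shows "hit_at_prob V E S u 0 = (if u \<in> S then 1 else 0)"
proof -
  have "{xs. set xs \<subseteq> V \<and> length xs = Suc 0 \<and> hd xs = u \<and> (\<forall>i<0. xs ! i \<notin> S) \<and> xs ! 0 \<in> S}
     = (if u \<in> S then {[u]} else {})"
    using assms by (auto simp: length_Suc_conv)
  then show ?thesis unfolding hit_at_prob_def by auto
qed

lemma hitSuc_S: assumes "u \<in> S" shows "hit_at_prob V E S u (Suc t) = 0"
proof -
  have "{xs. set xs \<subseteq> V \<and> length xs = Suc (Suc t) \<and> hd xs = u \<and> (\<forall>i<Suc t. xs ! i \<notin> S) \<and> xs ! Suc t \<in> S} = {}"
    using assms by (auto simp: length_Suc_conv)
  then show ?thesis unfolding hit_at_prob_def by (simp only: sum.empty)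
qed

lemma finite_lists: "finite V \<Longrightarrow> finite {xs. set xs \<subseteq> V \<and> length xs = n \<and> P xs}"
  by (rule finite_subset[OF _ finite_lists_length_eq[of V n]]) auto

lemma hitSuc: assumes "u \<in> V" "u \<notin> S" "finite V"
  shows "hit_at_prob V E S u (Suc t) =
    (\<Sum>w\<in>V. (if E u w then 1 / real (deg V E u) else 0) * hit_at_prob V E S w t)"
proof -
  define A where "A = {ys. set ys \<subseteq> V \<and> length ys = Suc t \<and> (\<forall>i<t. ys ! i \<notin> S) \<and> ys ! t \<in> S}"
  define g where "g = (\<lambda>w. if E u w then 1 / real (deg V E u) else 0)"
  have fA: "finite A" unfolding A_def using finite_lists[OF assms(3)] by simp
  have eq: "{xs. set xs \<subseteq> V \<and> length xs = Suc (Suc t) \<and> hd xs = u \<and> (\<forall>i<Suc t. xs ! i \<notin> S) \<and> xs ! Suc t \<in> S}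
       = (\<lambda>ys. u # ys) ` A"
  proof (rule set_eqI, rule iffI)
    fix xs assume "xs \<in> {xs. set xs \<subseteq> V \<and> length xs = Suc (Suc t) \<and> hd xs = u \<and> (\<forall>i<Suc t. xs ! i \<notin> S) \<and> xs ! Suc t \<in> S}"
    then have h: "set xs \<subseteq> V" "length xs = Suc (Suc t)" "hd xs = u" "\<forall>i<Suc t. xs ! i \<notin> S" "xs ! Suc t \<in> S" by auto
    then obtain ys where xs: "xs = u # ys" by (cases xs) auto
    have "\<forall>i<t. ys ! i \<notin> S"
    proof (intro allI impI)
      fix i assume "i < t" then have "xs ! Suc i \<notin> S" using h(4) by auto
      then show "ys ! i \<notin> S" using xs by simp
    qed
    then have "ys \<in> A" using h xs unfolding A_def by auto
    then show "xs \<in> (\<lambda>ys. u # ys) ` A" using xs by blast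
  next
    fix xs assume "xs \<in> (\<lambda>ys. u # ys) ` A"
    then obtain ys where xs: "xs = u # ys" and ys: "ys \<in> A" by blast
    have "\<forall>i<Suc t. xs ! i \<notin> S"
    proof (intro allI impI)
      fix i assume "i < Suc t"
      then show "xs ! i \<notin> S" using ys assms(2) xs unfolding A_def by (cases i) auto
    qed
    then show "xs \<in> {xs. set xs \<subseteq> V \<and> length xs = Suc (Suc t) \<and> hd xs = u \<and> (\<forall>i<Suc t. xs ! i \<notin> S) \<and> xs ! Suc t \<in> S}"
      using xs ys assms(1) unfolding A_def by auto
  qed
  have "hit_at_prob V E S u (Suc t) = (\<Sum>ys\<in>A. walk_prob V E (u # ys))"
    unfolding hit_at_prob_def eq by (subst sum.reindex) (auto simp: inj_on_def)
  also have "\<dots> = (\<Sum>ys\<in>A. g (hd ys) * walk_prob V E ys)"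
  proof (rule sum.cong[OF refl])
    fix ys assume "ys \<in> A"
    then obtain y zs where "ys = y # zs" unfolding A_def by (cases ys) auto
    then show "walk_prob V E (u # ys) = g (hd ys) * walk_prob V E ys" unfolding g_def by simp
  qed
  also have "\<dots> = (\<Sum>w\<in>V. (\<Sum>ys\<in>{ys. ys \<in> A \<and> hd ys = w}. g (hd ys) * walk_prob V E ys))"
  proof (rule sum.group[symmetric, OF fA assms(3)])
    show "hd ` A \<subseteq> V" unfolding A_def by (auto intro!: hd_in_set)
  qed
  also have "\<dots> = (\<Sum>w\<in>V. g w * hit_at_prob V E S w t)"
  proof (rule sum.cong[OF refl])
    fix w assume "w \<in> V"
    have "{ys. ys \<in> A \<and> hd ys = w} = {xs. set xs \<subseteq> V \<and> length xs = Suc t \<and> hd xs = w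
               \<and> (\<forall>i<t. xs ! i \<notin> S) \<and> xs ! t \<in> S}" unfolding A_def by auto
    then show "(\<Sum>ys\<in>{ys. ys \<in> A \<and> hd ys = w}. g (hd ys) * walk_prob V E ys) = g w * hit_at_prob V E S w t"
      unfolding hit_at_prob_def by (simp add: sum_distrib_left)
  qed
  finally show ?thesis unfolding g_def .
qed



lemma hitSuc': assumes "u \<in> V" "u \<notin> S" "finite V"
  shows "hit_at_prob V E S u (Suc t) =
    (\<Sum>w\<in>{w\<in>V. E u w}. hit_at_prob V E S w t) / real (deg V E u)"
proof -
  have "(\<Sum>w\<in>V. (if E u w then 1 / real (deg V E u) else 0) * hit_at_prob V E S w t)
      = (\<Sum>w\<in>V. (if E u w then hit_at_prob V E S w t / real (deg V E u) else 0))"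
    by (rule sum.cong) auto
  also have "\<dots> = (\<Sum>w\<in>{w\<in>V. E u w}. hit_at_prob V E S w t / real (deg V E u))"
    by (simp add: sum.inter_filter assms(3))
  finally show ?thesis using hitSuc[OF assms] by (simp add: sum_divide_distrib)
qed

definition pp where "pp V E S N u = (\<Sum>t<N. hit_at_prob V E S u t)"
definition aa where "aa V E S N u = (\<Sum>t<N. real t * hit_at_prob V E S u t)"

lemma pSuc: assumes "u \<in> V" "finite V"
  shows "pp V E S (Suc N) u = (if u \<in> S then 1 else (\<Sum>w\<in>{w\<in>V. E u w}. pp V E S N w) / real (deg V E u))"
proof (cases "u \<in> S")
  case True
  then show ?thesis unfolding pp_def sum.lessThan_Suc_shift using assms
    by (simp add: hit0 hitSuc_S)
next
  case False
  have "pp V E S (Suc N) u = (\<Sum>t<N. hit_at_prob V E S u (Suc t))"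
    unfolding pp_def sum.lessThan_Suc_shift using assms False by (simp add: hit0)
  also have "\<dots> = (\<Sum>t<N. (\<Sum>w\<in>{w\<in>V. E u w}. hit_at_prob V E S w t) / real (deg V E u))"
    using hitSuc'[OF assms(1) False assms(2)] by simp
  also have "\<dots> = (\<Sum>w\<in>{w\<in>V. E u w}. pp V E S N w) / real (deg V E u)"
    unfolding pp_def by (simp add: sum_divide_distrib[symmetric] sum.swap[of _ "{..<N}"])
  finally show ?thesis using False by simp
qed

lemma aSuc: assumes "u \<in> V" "finite V"
  shows "aa V E S (Suc N) u = (if u \<in> S then 0 else
      (\<Sum>w\<in>{w\<in>V. E u w}. aa V E S N w + pp V E S N w) / real (deg V E u))"
proof (cases "u \<in> S")
  case True
  then show ?thesis unfolding aa_def sum.lessThan_Suc_shift using assms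
    by (simp add: hit0 hitSuc_S del: of_nat_Suc)
next
  case False
  have "aa V E S (Suc N) u = (\<Sum>t<N. real (Suc t) * hit_at_prob V E S u (Suc t))"
    unfolding aa_def sum.lessThan_Suc_shift using assms False by (simp add: hit0 del: of_nat_Suc)
  also have "\<dots> = (\<Sum>t<N. (\<Sum>w\<in>{w\<in>V. E u w}. real (Suc t) * hit_at_prob V E S w t) / real (deg V E u))"
    using hitSuc'[OF assms(1) False assms(2)] by (simp add: sum_distrib_left del: of_nat_Suc)
  also have "\<dots> = (\<Sum>w\<in>{w\<in>V. E u w}. (\<Sum>t<N. real (Suc t) * hit_at_prob V E S w t)) / real (deg V E u)"
    by (simp add: sum_divide_distrib[symmetric] sum.swap[of _ "{..<N}"] del: of_nat_Suc)
  also have "\<dots> = (\<Sum>w\<in>{w\<in>V. E u w}. aa V E S N w + pp V E S N w) / real (deg V E u)"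
    unfolding aa_def pp_def by (simp add: sum.distrib[symmetric] algebra_simps)
  finally show ?thesis using False by simp
qed

lemma pp_nonneg: "pp V E S N u \<ge> 0" unfolding pp_def by (intro sum_nonneg hit_nonneg)
lemma aa_nonneg: "aa V E S N u \<ge> 0" unfolding aa_def
  by (intro sum_nonneg mult_nonneg_nonneg hit_nonneg) auto
lemma aa_mono: "aa V E S N u \<le> aa V E S (Suc N) u" unfolding aa_def
  by (simp add: hit_nonneg)

lemma card_nbr: "real (card {w\<in>V. E u w}) = real (deg V E u)" by (simp add: deg_def)

lemma pp_le1: assumes "finite V" shows "u \<in> V \<Longrightarrow> pp V E S N u \<le> 1"
proof (induction N arbitrary: u)
  case 0 then show ?case by (simp add: pp_def)
next
  case (Suc N)
  show ?case
  proof (cases "u \<in> S")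
    case True then show ?thesis using pSuc[OF Suc.prems assms] by simp
  next
    case False
    have "(\<Sum>w\<in>{w\<in>V. E u w}. pp V E S N w) \<le> (\<Sum>w\<in>{w\<in>V. E u w}. 1)"
      by (rule sum_mono) (use Suc.IH in auto)
    also have "\<dots> = real (deg V E u)" by (simp add: deg_def)
    finally have "(\<Sum>w\<in>{w\<in>V. E u w}. pp V E S N w) / real (deg V E u) \<le> 1"
      by (cases "deg V E u = 0") (auto simp: divide_le_eq)
    then show ?thesis using pSuc[OF Suc.prems assms] False by simp
  qed
qed

lemma aa_S: assumes "finite V" "u \<in> V" "u \<in> S" shows "aa V E S N u = 0"
  using aSuc[OF assms(2,1)] assms(3) by (cases N) (auto simp: aa_def)

lemma aa_sub: assumes "finite V" "u \<in> V" "u \<notin> S"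
  shows "real (deg V E u) * aa V E S N u \<le> real (deg V E u) + (\<Sum>w\<in>{w\<in>V. E u w}. aa V E S N w)"
proof (cases "deg V E u = 0")
  case True then show ?thesis
    by (simp add: sum_nonneg aa_nonneg)
next
  case False
  have "real (deg V E u) * aa V E S N u \<le> real (deg V E u) * aa V E S (Suc N) u"
    by (intro mult_left_mono aa_mono) auto
  also have "\<dots> = (\<Sum>w\<in>{w\<in>V. E u w}. aa V E S N w + pp V E S N w)"
    using aSuc[OF assms(2,1)] assms(3) False by simp
  also have "\<dots> = (\<Sum>w\<in>{w\<in>V. E u w}. aa V E S N w) + (\<Sum>w\<in>{w\<in>V. E u w}. pp V E S N w)"
    by (simp add: sum.distrib)
  also have "(\<Sum>w\<in>{w\<in>V. E u w}. pp V E S N w) \<le> (\<Sum>w\<in>{w\<in>V. E u w}. 1)"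
    by (rule sum_mono) (use pp_le1[OF assms(1)] in auto)
  also have "(\<Sum>w\<in>{w\<in>V. E u w}. (1::real)) = real (deg V E u)" by (simp add: deg_def)
  finally show ?thesis by simp
qed



lemma walk_nonempty: "is_walk V E xs \<Longrightarrow> xs \<noteq> []" by (cases xs) auto

lemma gd_exists: assumes "connected_graph V E" "u \<in> V" "v \<in> V"
  shows "\<exists>xs. is_walk V E xs \<and> hd xs = u \<and> last xs = v \<and> length xs = Suc (gdist V E u v)"
proof -
  obtain xs where xs: "is_walk V E xs" "hd xs = u" "last xs = v"
    using assms unfolding connected_graph_def by blast
  then have "length xs = Suc (length xs - 1)" using walk_nonempty by (cases xs) auto
  then have "\<exists>n. \<exists>xs. is_walk V E xs \<and> hd xs = u \<and> last xs = v \<and> length xs = Suc n" using xs by blast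
  then show ?thesis unfolding gdist_def by (rule LeastI_ex)
qed

lemma gd_le: "is_walk V E xs \<Longrightarrow> hd xs = u \<Longrightarrow> last xs = v \<Longrightarrow> length xs = Suc n \<Longrightarrow> gdist V E u v \<le> n"
  unfolding gdist_def by (rule Least_le) blast

lemma gd_refl: "u \<in> V \<Longrightarrow> gdist V E u u = 0"
  using gd_le[of V E "[u]" u u 0] by simp

lemma gd_zero: assumes "connected_graph V E" "u \<in> V" "v \<in> V" "gdist V E u v = 0" shows "u = v"
proof -
  obtain xs where "is_walk V E xs" "hd xs = u" "last xs = v" "length xs = Suc 0"
    using gd_exists[OF assms(1-3)] assms(4) by auto
  then show ?thesis by (cases xs) auto
qed

lemma gd_step: assumes "simple_graph V E" "connected_graph V E" "u \<in> V" "v \<in> V" "gdist V E u v = Suc k"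
  shows "\<exists>w\<in>V. E u w \<and> gdist V E w v \<le> k"
proof -
  obtain xs where xs: "is_walk V E xs" "hd xs = u" "last xs = v" "length xs = Suc (Suc k)"
    using gd_exists[OF assms(2-4)] assms(5) by auto
  then obtain y zs where xs': "xs = u # y # zs" by (cases xs; cases "tl xs") auto
  have w: "is_walk V E (y # zs)" "E u y" using xs(1) xs' by auto
  have "gdist V E y v \<le> k"
    by (rule gd_le[OF w(1)]) (use xs xs' in auto)
  moreover have "y \<in> V" using w(2) assms(1) unfolding simple_graph_def by blast
  ultimately show ?thesis using w(2) by blast
qed

lemma gds_S: assumes "finite S" "u \<in> S" "u \<in> V" shows "gdist_set V E u S = 0"
proof -
  have "gdist_set V E u S \<le> gdist V E u u" unfolding gdist_set_def using assms by (intro Min_le) auto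
  then show ?thesis using gd_refl[OF assms(3)] by simp
qed

lemma gds_attain: assumes "finite S" "S \<noteq> {}" shows "\<exists>v\<in>S. gdist_set V E u S = gdist V E u v"
proof -
  have "Min (gdist V E u ` S) \<in> gdist V E u ` S" using assms by (intro Min_in) auto
  then show ?thesis unfolding gdist_set_def by auto
qed

lemma gds_le: assumes "finite S" "v \<in> S" shows "gdist_set V E u S \<le> gdist V E u v"
  unfolding gdist_set_def using assms by (intro Min_le) auto

lemma gds_zero: assumes "connected_graph V E" "S \<subseteq> V" "finite S" "S \<noteq> {}" "u \<in> V" "gdist_set V E u S = 0"
  shows "u \<in> S"
  using gds_attain[OF assms(3,4), of V E u] gd_zero[OF assms(1,5)] assms by force

lemma gds_step: assumes "simple_graph V E" "connected_graph V E" "S \<subseteq> V" "finite S" "S \<noteq> {}" "u \<in> V"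
   "gdist_set V E u S = Suc k"
  shows "\<exists>w\<in>V. E u w \<and> gdist_set V E w S \<le> k"
proof -
  obtain v where v: "v \<in> S" "gdist_set V E u S = gdist V E u v" using gds_attain[OF assms(4,5)] by blast
  obtain w where "w \<in> V" "E u w" "gdist V E w v \<le> k"
  proof -
    have "v \<in> V" using v assms(3) by auto
    moreover have "gdist V E u v = Suc k" using v assms(7) by simp
    ultimately show ?thesis using gd_step[OF assms(1,2,6)] that by blast
  qed
  then show ?thesis using gds_le[OF assms(4) v(1), of V E w] by force
qed



lemma potential_bound:
  fixes a :: "'a \<Rightarrow> real"
  assumes sg: "simple_graph V E" and conn: "connected_graph V E" and SV: "S \<subseteq> V" and Sne: "S \<noteq> {}"
    and a0: "\<And>u. u \<in> V \<Longrightarrow> a u \<ge> 0" and aS: "\<And>u. u \<in> S \<Longrightarrow> a u = 0"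
    and sub: "\<And>u. u \<in> V - S \<Longrightarrow> real (deg V E u) * a u \<le> real (deg V E u) + (\<Sum>w\<in>{w\<in>V. E u w}. a w)"
  shows "u \<in> V \<Longrightarrow> a u \<le> (\<Sum>v\<in>V-S. real (deg V E v)) * real (gdist_set V E u S)"
proof -
  define D where "D = (\<Sum>v\<in>V-S. real (deg V E v))"
  have fV: "finite V" using sg unfolding simple_graph_def by auto
  have fS: "finite S" using fV SV finite_subset by auto
  have sym: "\<And>x y. E x y \<Longrightarrow> E y x" using sg unfolding simple_graph_def by auto
  have D0: "D \<ge> 0" unfolding D_def by (simp add: sum_nonneg)
  have main: "\<forall>u\<in>V. gdist_set V E u S = k \<longrightarrow> a u \<le> D * real k" for k
  proof (induction k rule: less_induct)
    case (less k)
    show ?case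
    proof (cases k)
      case 0
      then show ?thesis using gds_zero[OF conn SV fS Sne] aS by auto
    next
      case (Suc j)
      define c where "c = D * real j"
      define T where "T = {x\<in>V. gdist_set V E x S \<le> j}"
      define U where "U = V - T"
      define b where "b = (\<lambda>x. max 0 (a x - c))"
      have aT: "a x \<le> c" if "x \<in> T" for x
      proof -
        have "a x \<le> D * real (gdist_set V E x S)" using less.IH[of "gdist_set V E x S"] that Suc
          unfolding T_def by auto
        also have "\<dots> \<le> c" unfolding c_def using that D0 unfolding T_def by (auto intro: mult_left_mono)
        finally show ?thesis .
      qed
      have bT: "b x = 0" if "x \<in> T" for x using aT[OF that] unfolding b_def by auto
      have b0: "b x \<ge> 0" for x unfolding b_def by auto
      have US: "U \<subseteq> V - S" unfolding U_def T_def using gds_S[OF fS] by auto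
      have fU: "finite U" using fV unfolding U_def by auto
      have cl1: "real (deg V E x) * b x \<le> real (deg V E x) + (\<Sum>y\<in>{y\<in>U. E x y}. b y)" if "x \<in> U" for x
      proof (cases "a x \<le> c")
        case True
        then show ?thesis unfolding b_def by (simp add: sum_nonneg)
      next
        case False
        have "real (deg V E x) * b x = real (deg V E x) * a x - (\<Sum>y\<in>{y\<in>V. E x y}. c)"
          using False unfolding b_def by (simp add: deg_def algebra_simps)
        also have "\<dots> \<le> real (deg V E x) + (\<Sum>y\<in>{y\<in>V. E x y}. a y) - (\<Sum>y\<in>{y\<in>V. E x y}. c)"
          using sub[of x] that US by auto
        also have "\<dots> = real (deg V E x) + (\<Sum>y\<in>{y\<in>V. E x y}. a y - c)"
          by (simp add: sum_subtractf)
        also have "(\<Sum>y\<in>{y\<in>V. E x y}. a y - c) \<le> (\<Sum>y\<in>{y\<in>V. E x y}. b y)"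
          by (rule sum_mono) (simp add: b_def)
        also have "(\<Sum>y\<in>{y\<in>V. E x y}. b y) = (\<Sum>y\<in>{y\<in>U. E x y}. b y)"
          by (rule sum.mono_neutral_right) (use fV bT in \<open>auto simp: U_def\<close>)
        finally show ?thesis by simp
      qed
      have cl2: "(\<Sum>x\<in>U. real (deg V E x) * b x) \<le> (\<Sum>x\<in>U. real (deg V E x)) + (\<Sum>x\<in>U. \<Sum>y\<in>{y\<in>U. E x y}. b y)"
        using sum_mono[OF cl1, of U] by (simp add: sum.distrib)
      have cl3: "(\<Sum>x\<in>U. \<Sum>y\<in>{y\<in>U. E x y}. b y) = (\<Sum>y\<in>U. b y * real (card {x\<in>U. E y x}))"
      proof -
        have "(\<Sum>x\<in>U. \<Sum>y\<in>{y\<in>U. E x y}. b y) = (\<Sum>x\<in>U. \<Sum>y\<in>U. if E x y then b y else 0)"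
          by (simp add: sum.inter_filter fU)
        also have "\<dots> = (\<Sum>y\<in>U. \<Sum>x\<in>U. if E x y then b y else 0)" by (rule sum.swap)
        also have "\<dots> = (\<Sum>y\<in>U. \<Sum>x\<in>{x\<in>U. E y x}. b y)"
        proof (rule sum.cong[OF refl])
          fix y assume "y \<in> U"
          have "(\<Sum>x\<in>U. if E x y then b y else 0) = (\<Sum>x\<in>U. if E y x then b y else 0)"
            by (rule sum.cong) (auto dest: sym)
          also have "\<dots> = (\<Sum>x\<in>{x\<in>U. E y x}. b y)"
            by (rule sum.inter_filter[symmetric, OF fU])
          finally show "(\<Sum>x\<in>U. if E x y then b y else 0) = (\<Sum>x\<in>{x\<in>U. E y x}. b y)" .
        qed
        also have "\<dots> = (\<Sum>y\<in>U. b y * real (card {x\<in>U. E y x}))" by (simp add: mult.commute)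
        finally show ?thesis .
      qed
      have cl4: "real (deg V E y) = real (card {x\<in>U. E y x}) + real (card {x\<in>T. E y x})" for y
      proof -
        have "{x\<in>V. E y x} = {x\<in>U. E y x} \<union> {x\<in>T. E y x}" unfolding U_def T_def by auto
        moreover have "card ({x\<in>U. E y x} \<union> {x\<in>T. E y x}) = card {x\<in>U. E y x} + card {x\<in>T. E y x}"
          by (rule card_Un_disjoint) (use fV in \<open>auto simp: U_def T_def\<close>)
        ultimately show ?thesis unfolding deg_def by simp
      qed
      have "(\<Sum>y\<in>U. b y * real (card {x\<in>T. E y x})) \<le> (\<Sum>x\<in>U. real (deg V E x))"
      proof -
        have "(\<Sum>y\<in>U. b y * real (card {x\<in>T. E y x})) = (\<Sum>y\<in>U. real (deg V E y) * b y) - (\<Sum>y\<in>U. b y * real (card {x\<in>U. E y x}))"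
          by (simp add: cl4 sum_subtractf[symmetric] algebra_simps)
        then show ?thesis using cl2 cl3 by simp
      qed
      also have "\<dots> \<le> D" unfolding D_def
        by (rule sum_mono2) (use fV US in auto)
      finally have S1: "(\<Sum>y\<in>U. b y * real (card {x\<in>T. E y x})) \<le> D" .
      show ?thesis
      proof (intro ballI impI)
        fix u assume u: "u \<in> V" "gdist_set V E u S = k"
        then obtain w where w: "w \<in> V" "E u w" "gdist_set V E w S \<le> j"
          using gds_step[OF sg conn SV fS Sne u(1)] Suc by auto
        have uU: "u \<in> U" using u Suc unfolding U_def T_def by auto
        have "w \<in> {x\<in>T. E u x}" using w unfolding T_def by auto
        then have "card {x\<in>T. E u x} \<ge> 1"
          using fV by (metis (no_types, lifting) One_nat_def Suc_leI card_gt_0_iff empty_iff finite_subset mem_Collect_eq subsetI T_def)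
        then have "b u \<le> b u * real (card {x\<in>T. E u x})"
          using b0[of u] by (simp add: mult_le_cancel_left1)
        also have "\<dots> \<le> (\<Sum>y\<in>U. b y * real (card {x\<in>T. E y x}))"
          by (rule member_le_sum) (use uU fU b0 in auto)
        also have "\<dots> \<le> D" by (rule S1)
        finally have "a u - c \<le> D" unfolding b_def by simp
        then show "a u \<le> D * real k" unfolding c_def using Suc by (simp add: algebra_simps)
      qed
    qed
  qed
  assume "u \<in> V"
  then show ?thesis using main unfolding D_def by blast
qed



theorem proposition2:
  fixes V :: "'a set" and E :: "'a \<Rightarrow> 'a \<Rightarrow> bool"
  assumes "simple_graph V E" and "connected_graph V E"
  shows "\<exists>c::real. c > 0 \<and> (\<forall>S. S \<noteq> {} \<and> S \<subset> V \<longrightarrow>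
     avg_hitting_time V E S
       \<le> (1 / real (card (V - S))) * real (\<Sum>u\<in>V - S. gdist_set V E u S)
            * real (\<Sum>v\<in>V - S. deg V E v)
     \<and> (1 / real (card (V - S))) * real (\<Sum>u\<in>V - S. gdist_set V E u S)
            * real (\<Sum>v\<in>V - S. deg V E v)
       \<le> c * real (card (V - S)) ^ 3)"
proof -
  have fV: "finite V" using assms(1) unfolding simple_graph_def by auto
  define K where "K = Max ((\<lambda>(x,y). gdist V E x y) ` (V \<times> V))"
  define c :: real where "c = real K * real (card V) + 1"
  have c0: "c > 0" unfolding c_def by (simp add: add_nonneg_pos)
  have part: "avg_hitting_time V E S
       \<le> (1 / real (card (V - S))) * real (\<Sum>u\<in>V - S. gdist_set V E u S)
            * real (\<Sum>v\<in>V - S. deg V E v)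
     \<and> (1 / real (card (V - S))) * real (\<Sum>u\<in>V - S. gdist_set V E u S)
            * real (\<Sum>v\<in>V - S. deg V E v)
       \<le> c * real (card (V - S)) ^ 3" if S: "S \<noteq> {}" "S \<subset> V" for S
  proof -
    define D where "D = (\<Sum>v\<in>V-S. real (deg V E v))"
    define n where "n = card (V - S)"
    have SV: "S \<subseteq> V" using S by auto
    have fS: "finite S" using fV SV finite_subset by auto
    have "V - S \<noteq> {}" using S by auto
    then have "card (V - S) > 0" using fV by (simp add: card_gt_0_iff)
    then have n1: "n \<ge> 1" unfolding n_def by simp
    have Hle: "hitting_time V E u S \<le> D * real (gdist_set V E u S)" if u: "u \<in> V - S" for u
    proof -
      have bnd: "aa V E S N u \<le> D * real (gdist_set V E u S)" for N
        unfolding D_def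
      proof (rule potential_bound[OF assms SV S(1)])
        show "\<And>u. u \<in> V \<Longrightarrow> 0 \<le> aa V E S N u" by (rule aa_nonneg)
        show "\<And>u. u \<in> S \<Longrightarrow> aa V E S N u = 0" using aa_S[OF fV] SV by auto
        show "\<And>u. u \<in> V - S \<Longrightarrow> real (deg V E u) * aa V E S N u
            \<le> real (deg V E u) + (\<Sum>w\<in>{w \<in> V. E u w}. aa V E S N w)" using aa_sub[OF fV] by auto
        show "u \<in> V" using u by auto
      qed
      have nn: "\<And>t. 0 \<le> real t * hit_at_prob V E S u t" by (simp add: hit_nonneg)
      have sm: "summable (\<lambda>t. real t * hit_at_prob V E S u t)"
        by (rule summableI_nonneg_bounded[OF nn]) (use bnd in \<open>simp add: aa_def\<close>)
      show ?thesis unfolding hitting_time_def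
        by (rule suminf_le_const[OF sm]) (use bnd in \<open>simp add: aa_def\<close>)
    qed
    have first: "avg_hitting_time V E S \<le> (1 / real n) * real (\<Sum>u\<in>V - S. gdist_set V E u S) * D"
    proof -
      have "(\<Sum>u\<in>V - S. hitting_time V E u S) \<le> (\<Sum>u\<in>V - S. D * real (gdist_set V E u S))"
        by (rule sum_mono) (rule Hle)
      also have "\<dots> = real (\<Sum>u\<in>V - S. gdist_set V E u S) * D" by (simp add: sum_distrib_left mult.commute)
      finally show ?thesis unfolding avg_hitting_time_def n_def
        by (simp add: divide_right_mono)
    qed
    have G: "real (\<Sum>u\<in>V - S. gdist_set V E u S) \<le> real n * real K"
    proof -
      have "(\<Sum>u\<in>V - S. gdist_set V E u S) \<le> (\<Sum>u\<in>V - S. K)"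
      proof (rule sum_mono)
        fix u assume u: "u \<in> V - S"
        obtain v where v: "v \<in> S" using S by auto
        have "gdist_set V E u S \<le> gdist V E u v" by (rule gds_le[OF fS v])
        also have "\<dots> \<le> K" unfolding K_def using u v SV fV
          by (intro Max_ge) (auto intro!: image_eqI[where x="(u,v)"])
        finally show "gdist_set V E u S \<le> K" .
      qed
      then have "real (\<Sum>u\<in>V - S. gdist_set V E u S) \<le> real (card (V - S) * K)"
        by (simp only: sum_constant of_nat_le_iff of_nat_id)
      then show ?thesis unfolding n_def by (simp only: of_nat_mult)
    qed
    have Dle: "D \<le> real n * real (card V)"
    proof -
      have "D \<le> (\<Sum>v\<in>V-S. real (card V))" unfolding D_def
        by (rule sum_mono) (use fV in \<open>auto simp: deg_def intro!: card_mono\<close>)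
      then show ?thesis unfolding n_def by simp
    qed
    have D0: "D \<ge> 0" unfolding D_def by (simp add: sum_nonneg)
    have second: "(1 / real n) * real (\<Sum>u\<in>V - S. gdist_set V E u S) * D \<le> c * real n ^ 3"
    proof -
      have "(1 / real n) * real (\<Sum>u\<in>V - S. gdist_set V E u S) * D \<le> (1 / real n) * (real n * real K) * (real n * real (card V))"
        using G Dle D0 n1 by (intro mult_mono) (auto simp: sum_nonneg)
      also have "\<dots> = real K * real (card V) * real n" using n1 by (simp add: field_simps)
      also have "\<dots> \<le> c * real n" unfolding c_def using n1 by (intro mult_right_mono) auto
      also have "\<dots> \<le> c * real n ^ 3"
      proof -
        have r1: "real n \<ge> 1" using n1 by simp
        have "1 \<le> real n * real n" using mult_mono[OF r1 r1] by simp
        then have "real n * 1 \<le> real n * (real n * real n)" using r1 by (intro mult_left_mono) auto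
        then have "real n \<le> real n ^ 3" by (simp add: power3_eq_cube)
        then show ?thesis using c0 by (intro mult_left_mono) auto
      qed
      finally show ?thesis .
    qed
    have Deq: "real (\<Sum>v\<in>V - S. deg V E v) = D" unfolding D_def by simp
    show ?thesis using first second unfolding Deq n_def by simp
  qed
  show ?thesis using c0 part by blast
qed


end
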